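(* Let $L,R,M\in\mathbb{N}$, let $\mathcal{X}$ be any set and $\Phi\subseteq\{0,1\}^{\mathcal{X}}$ any set of features closed under negation, and let $\mathcal{T}$ be the relaxed component model teacher class (defined in the context) for these parameters. Let $H=\{(x_0,0)\}$ for some $x_0\in\mathcal{X}$ such that $\mathcal{T}$ is consistent with $H$. Then $\mathrm{DFFdim}(\mathcal{T},H)\leq RM$.
   Context: Setting. $\mathcal{X}$ is a set of examples, $\mathcal{Y}$ a finite set of labels, and $\Phi$ a set of Boolean features $\phi:\mathcal{X}\to\{0,1\}$; $\bot$ denotes a null symbol not in $\mathcal{X}\cup\mathcal{Y}\cup\Phi$. A teacher over $\mathcal{X},\mathcal{Y},\Phi$ is a pair $T=(\ell,\psi)$ with $\ell:\mathcal{X}\to\mathcal{Y}$ and $\psi:\mathcal{X}\times\mathcal{X}\to\Phi\cup\{\bot\}$ such that whenever $\ell(x)\neq\ell(\hat x)$, $\phi:=\psi(x,\hat x)\in\Phi$, $\phi(x)=1$ and $\phi(\hat x)=0$. A teacher class is a set of teachers. A history is a non-empty set $H\subseteq\mathcal{X}\times\mathcal{Y}$; a teacher $(\ell,\psi)$ is consistent with $H$ if $\ell(x)=y$ for all $(x,y)\in H$; $\mathcal{T}_H$ is the set of teachers in $\mathcal{T}$ consistent with $H$, and $\mathcal{T}$ is consistent with $H$ if $\mathcal{T}_H\neq\emptyset$. DFF dimension. A DFF tree is a rooted tree whose nodes are triples $\langle y,\phi,x\rangle$ with $y\in\mathcal{Y}\cup\{\bot\}$, $\phi\in\Phi\cup\{\bot\}$,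 $x\in\mathcal{X}\cup\{\bot\}$, such that the root has $y=\phi=\bot$, a node has $x=\bot$ iff it is a leaf, every edge is labeled by a pair $(\hat x,\hat y)\in\mathcal{X}\times\mathcal{Y}$, and every non-root node $\langle y,\phi,x\rangle$ with incoming edge $(\hat x,\hat y)$ has $\phi\neq\bot$ whenever $y\neq\hat y$. For a parent–child pair $\langle\cdot,\cdot,x\rangle\xrightarrow{(\hat x,\hat y)}\langle y,\phi,\cdot\rangle$ on a path, $(x,y)$ is called a labeled example in that path. A path from the root is consistent with a teacher $(\ell,\psi)$ if for every such parent–child pair on it, $\ell(x)=y$ and, if $y\neq\hat y$, $\psi(x,\hat x)=\phi$. Given $\mathcal{T}$ consistent with $H$, a DFF tree is shattered by $\mathcal{T}$ and $H$ if: (1) every non-root node $\langle y,\phi,x\rangle$ with incoming edge $(\hat x,\hat y)$ has $y\neq\hat y$; (2) the labels of the outgoing edges of each non-leaf node $v$ are exactly the pairs that belong to $H$ or are labeled examples in the path from the root to $v$; (3) every root-to-leaf path is consistent with some teacher in $\mathcal{T}_H$; (4) all root-to-leaf paths have the same number of edges, called the height. $\mathrm{DFFdim}(\mathcal{T},H)$ is the maximal height of a DFF tree shattered by $\mathcal{T}$ and $H$. Relaxed component model. Let $\mathcal{Y}=\{0,1,\dots,L\}$. For $S\subseteq\Phi$ write $S(x)=\prod_{\phi\in S}\phi(x)$. For a collection $\mathcal{S}=\{S_1,\dots,S_R\}$ of (at most $R$) subsets of $\Phi$, each of size at most $M$, and $q:[R]\to[L]$, define $\ell_{\mathcal{S},q}(x)=q(j)$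 if $S_j(x)=1$, and $\ell_{\mathcal{S},q}(x)=0$ if no $j$ has $S_j(x)=1$; $\ell_{\mathcal{S},q}$ is defined only if for every $x$ all $j$ with $S_j(x)=1$ give the same $q(j)$. Let $\mathcal{L}$ be the set of pairs $(\mathcal{S},q)$ for which $\ell_{\mathcal{S},q}$ is defined. Let $F(x)=\{\phi\in\Phi:\phi(x)=1\}$ and $\neg A=\{\neg\phi:\phi\in A\}$. $\mathcal{T}_{\mathcal{S},q}$ is the set of all teachers $(\ell_{\mathcal{S},q},\psi)$ for which there is a map $x\mapsto S(x)\in\mathcal{S}$, defined on all $x$ with $\ell_{\mathcal{S},q}(x)\neq0$, with $S(x)=S_j$ for some $j$ satisfying $S_j(x)=1$ and $q(j)=\ell_{\mathcal{S},q}(x)$, such that for all $x,\hat x$ with $\ell_{\mathcal{S},q}(x)\neq\ell_{\mathcal{S},q}(\hat x)$: if $\ell_{\mathcal{S},q}(\hat x)\neq0$ then $\psi(x,\hat x)\in F(x)\cap\neg S(\hat x)$, and otherwise $\psi(x,\hat x)\in S(x)\cap\neg F(\hat x)$. The teacher class is $\mathcal{T}=\bigcup_{(\mathcal{S},q)\in\mathcal{L}}\mathcal{T}_{\mathcal{S},q}$. *)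

theory Defs
  imports Main "HOL-Library.Extended_Nat"
begin

text \<open>Examples have type 'x (the example set X is the whole type), labels 'y,
  features 'f.  The null symbol is None.  A teacher is a pair (l, psi).\<close>

definition teacher ::
  "'y set \<Rightarrow> ('x \<Rightarrow> bool) set \<Rightarrow> ('x \<Rightarrow> 'y) \<times> ('x \<Rightarrow> 'x \<Rightarrow> ('x \<Rightarrow> bool) option) \<Rightarrow> bool" where
  "teacher Ys Phi T \<longleftrightarrow>
     (\<forall>x. fst T x \<in> Ys) \<and>
     (\<forall>x xh. snd T x xh = None \<or> (\<exists>\<phi>\<in>Phi. snd T x xh = Some \<phi>)) \<and>
     (\<forall>x xh. fst T x \<noteq> fst T xh \<longrightarrow>
        (\<exists>\<phi>. snd T x xh = Some \<phi> \<and> \<phi> \<in> Phi \<and> \<phi> x \<and> \<not> \<phi> xh))"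

definition consistent_with :: "('x \<Rightarrow> 'y) \<times> 'p \<Rightarrow> ('x \<times> 'y) set \<Rightarrow> bool" where
  "consistent_with T H \<longleftrightarrow> (\<forall>(x, y)\<in>H. fst T x = y)"

definition restrict_class :: "(('x \<Rightarrow> 'y) \<times> 'p) set \<Rightarrow> ('x \<times> 'y) set \<Rightarrow> (('x \<Rightarrow> 'y) \<times> 'p) set" where
  "restrict_class TT H = {T \<in> TT. consistent_with T H}"

definition class_consistent :: "(('x \<Rightarrow> 'y) \<times> 'p) set \<Rightarrow> ('x \<times> 'y) set \<Rightarrow> bool" where
  "class_consistent TT H \<longleftrightarrow> restrict_class TT H \<noteq> {}"

text \<open>A node is a triple (y, phi, x) of optional values together with its list of
  outgoing edges; each edge carries a label (xh, yh) and leads to a child.\<close>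

datatype ('x, 'y, 'f) dff =
  DNode (ny: "'y option") (nphi: "'f option") (nx: "'x option")
        (kids: "(('x \<times> 'y) \<times> ('x, 'y, 'f) dff) list")

text \<open>A step of a path: (x of the parent, edge label, y of the child, phi of the child).\<close>

type_synonym ('x, 'y, 'f) step = "'x option \<times> ('x \<times> 'y) \<times> 'y option \<times> 'f option"

inductive reach :: "('x, 'y, 'f) dff \<Rightarrow> ('x, 'y, 'f) step list \<Rightarrow> ('x, 'y, 'f) dff \<Rightarrow> bool"
  for t where
  reach_root: "reach t [] t"
| reach_step: "reach t p v \<Longrightarrow> (lab, c) \<in> set (kids v) \<Longrightarrow>
                 reach t (p @ [(nx v, lab, ny c, nphi c)]) c"

definition is_leaf :: "('x, 'y, 'f) dff \<Rightarrow> bool" where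
  "is_leaf v \<longleftrightarrow> kids v = []"

definition dff_tree :: "'y set \<Rightarrow> 'f set \<Rightarrow> ('x, 'y, 'f) dff \<Rightarrow> bool" where
  "dff_tree Ys Phi t \<longleftrightarrow>
     ny t = None \<and> nphi t = None \<and>
     (\<forall>p v. reach t p v \<longrightarrow>
        (ny v = None \<or> (\<exists>y\<in>Ys. ny v = Some y)) \<and>
        (nphi v = None \<or> (\<exists>\<phi>\<in>Phi. nphi v = Some \<phi>)) \<and>
        (nx v = None \<longleftrightarrow> is_leaf v) \<and>
        (\<forall>e\<in>set (kids v). snd (fst e) \<in> Ys) \<and>
        (p \<noteq> [] \<longrightarrow> ny v \<noteq> Some (snd (fst (snd (last p)))) \<longrightarrow> nphi v \<noteq> None))"

definition labeled_examples :: "('x, 'y, 'f) step list \<Rightarrow> ('x \<times> 'y) set" where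
  "labeled_examples p = {(x, y). \<exists>lab \<phi>. (Some x, lab, Some y, \<phi>) \<in> set p}"

definition path_consistent ::
  "('x \<Rightarrow> 'y) \<times> ('x \<Rightarrow> 'x \<Rightarrow> 'f option) \<Rightarrow> ('x, 'y, 'f) step list \<Rightarrow> bool" where
  "path_consistent T p \<longleftrightarrow>
     (\<forall>(xo, (xh, yh), yo, \<phi>o) \<in> set p. \<exists>x. xo = Some x \<and> yo = Some (fst T x) \<and>
        (fst T x \<noteq> yh \<longrightarrow> snd T x xh = \<phi>o))"

definition shattered ::
  "(('x \<Rightarrow> 'y) \<times> ('x \<Rightarrow> 'x \<Rightarrow> 'f option)) set \<Rightarrow> ('x \<times> 'y) set \<Rightarrow> ('x, 'y, 'f) dff \<Rightarrow> nat \<Rightarrow> bool" where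
  "shattered TT H t h \<longleftrightarrow>
     (\<forall>p v. reach t p v \<longrightarrow> p \<noteq> [] \<longrightarrow> ny v \<noteq> Some (snd (fst (snd (last p))))) \<and>
     (\<forall>p v. reach t p v \<longrightarrow> \<not> is_leaf v \<longrightarrow> fst ` set (kids v) = H \<union> labeled_examples p) \<and>
     (\<forall>p v. reach t p v \<longrightarrow> is_leaf v \<longrightarrow> (\<exists>T\<in>restrict_class TT H. path_consistent T p)) \<and>
     (\<forall>p v. reach t p v \<longrightarrow> is_leaf v \<longrightarrow> length p = h)"

definition DFFdim ::
  "'y set \<Rightarrow> 'f set \<Rightarrow> (('x \<Rightarrow> 'y) \<times> ('x \<Rightarrow> 'x \<Rightarrow> 'f option)) set \<Rightarrow> ('x \<times> 'y) set \<Rightarrow> enat" where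
  "DFFdim Ys Phi TT H = Sup {enat h | h. \<exists>t. dff_tree Ys Phi t \<and> shattered TT H t h}"

definition sat :: "('x \<Rightarrow> bool) set \<Rightarrow> 'x \<Rightarrow> bool" where
  "sat S x \<longleftrightarrow> (\<forall>\<phi>\<in>S. \<phi> x)"

definition neg :: "('x \<Rightarrow> bool) \<Rightarrow> ('x \<Rightarrow> bool)" where
  "neg \<phi> = (\<lambda>x. \<not> \<phi> x)"

definition Fset :: "('x \<Rightarrow> bool) set \<Rightarrow> 'x \<Rightarrow> ('x \<Rightarrow> bool) set" where
  "Fset Phi x = {\<phi> \<in> Phi. \<phi> x}"

text \<open>The collection is indexed S 1, ..., S R; q maps indices 1..R to labels 1..L.\<close>

definition rcm_label :: "nat \<Rightarrow> (nat \<Rightarrow> ('x \<Rightarrow> bool) set) \<Rightarrow> (nat \<Rightarrow> nat) \<Rightarrow> 'x \<Rightarrow> nat" where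
  "rcm_label R S q x =
     (if \<exists>j\<in>{1..R}. sat (S j) x then q (SOME j. j \<in> {1..R} \<and> sat (S j) x) else 0)"

definition rcm_defined :: "nat \<Rightarrow> (nat \<Rightarrow> ('x \<Rightarrow> bool) set) \<Rightarrow> (nat \<Rightarrow> nat) \<Rightarrow> bool" where
  "rcm_defined R S q \<longleftrightarrow>
     (\<forall>x. \<forall>i\<in>{1..R}. \<forall>j\<in>{1..R}. sat (S i) x \<longrightarrow> sat (S j) x \<longrightarrow> q i = q j)"

definition rcm_params ::
  "nat \<Rightarrow> nat \<Rightarrow> nat \<Rightarrow> ('x \<Rightarrow> bool) set \<Rightarrow> ((nat \<Rightarrow> ('x \<Rightarrow> bool) set) \<times> (nat \<Rightarrow> nat)) set" where
  "rcm_params L R M Phi =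
     {(S, q). (\<forall>j\<in>{1..R}. S j \<subseteq> Phi \<and> finite (S j) \<and> card (S j) \<le> M \<and> q j \<in> {1..L})
              \<and> rcm_defined R S q}"

definition rcm_teachers ::
  "nat \<Rightarrow> nat \<Rightarrow> ('x \<Rightarrow> bool) set \<Rightarrow> (nat \<Rightarrow> ('x \<Rightarrow> bool) set) \<Rightarrow> (nat \<Rightarrow> nat)
     \<Rightarrow> (('x \<Rightarrow> nat) \<times> ('x \<Rightarrow> 'x \<Rightarrow> ('x \<Rightarrow> bool) option)) set" where
  "rcm_teachers L R Phi S q =
     {(l, \<psi>). l = rcm_label R S q \<and> teacher {0..L} Phi (l, \<psi>) \<and>
        (\<exists>Sx :: 'x \<Rightarrow> ('x \<Rightarrow> bool) set.
           (\<forall>x. l x \<noteq> 0 \<longrightarrow> (\<exists>j\<in>{1..R}. Sx x = S j \<and> sat (S j) x \<and> q j = l x)) \<and>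
           (\<forall>x xh. l x \<noteq> l xh \<longrightarrow>
              (if l xh \<noteq> 0 then (\<exists>\<phi>. \<psi> x xh = Some \<phi> \<and> \<phi> \<in> Fset Phi x \<inter> neg ` Sx xh)
               else (\<exists>\<phi>. \<psi> x xh = Some \<phi> \<and> \<phi> \<in> Sx x \<inter> neg ` Fset Phi xh))))}"

definition rcm_class ::
  "nat \<Rightarrow> nat \<Rightarrow> nat \<Rightarrow> ('x \<Rightarrow> bool) set
     \<Rightarrow> (('x \<Rightarrow> nat) \<times> ('x \<Rightarrow> 'x \<Rightarrow> ('x \<Rightarrow> bool) option)) set" where
  "rcm_class L R M Phi = (\<Union>(S, q)\<in>rcm_params L R M Phi. rcm_teachers L R Phi S q)"

end

theory Submission
  imports Defs
begin

definition upd :: "(('x \<times> nat) \<Rightarrow> ('x \<Rightarrow> bool) set) \<Rightarrow> ('x, nat, 'x \<Rightarrow> bool) step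
    \<Rightarrow> (('x \<times> nat) \<Rightarrow> ('x \<Rightarrow> bool) set)" where
  "upd A s = (case s of (Some x, (xh, yh), Some y, Some \<phi>) \<Rightarrow>
      (if yh = 0 then A((x, y) := insert \<phi> (A (x, y)))
       else A((xh, yh) := insert (neg \<phi>) (A (xh, yh))))
    | _ \<Rightarrow> A)"

definition stA :: "('x, nat, 'x \<Rightarrow> bool) step list \<Rightarrow> (('x \<times> nat) \<Rightarrow> ('x \<Rightarrow> bool) set)" where
  "stA p = foldl upd (\<lambda>_. {}) p"

definition fires :: "(('x \<times> nat) \<Rightarrow> ('x \<Rightarrow> bool) set) \<Rightarrow> ('x \<times> nat) set \<Rightarrow> 'x \<Rightarrow> bool" where
  "fires A E x \<longleftrightarrow> (\<exists>k\<in>E. snd k \<noteq> 0 \<and> A k \<noteq> {} \<and> sat (A k) x)"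

definition choice :: "'x \<Rightarrow> (('x \<times> nat) \<Rightarrow> ('x \<Rightarrow> bool) set) \<Rightarrow> ('x \<times> nat) set \<Rightarrow> 'x \<Rightarrow> 'x \<times> nat" where
  "choice x0 A E x = (if fires A E x then (SOME k. k \<in> E \<and> snd k \<noteq> 0 \<and> A k \<noteq> {} \<and> sat (A k) x) else (x0, 0))"

definition follows :: "'x \<Rightarrow> ('x, nat, 'x \<Rightarrow> bool) step list \<Rightarrow> bool" where
  "follows x0 p \<longleftrightarrow> (\<forall>i<length p. \<exists>x. fst (p!i) = Some x \<and>
      fst (snd (p!i)) = choice x0 (stA (take i p)) (labeled_examples (take i p)) x)"

lemma stA_snoc: "stA (p @ [s]) = upd (stA p) s"
  by (simp add: stA_def)

lemma follows_snoc: "follows x0 (p @ [s]) \<longleftrightarrow> follows x0 p \<and>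
   (\<exists>x. fst s = Some x \<and> fst (snd s) = choice x0 (stA p) (labeled_examples p) x)"
proof -
  let ?Q = "\<lambda>q i. \<exists>x. fst (q!i) = Some x \<and>
      fst (snd (q!i)) = choice x0 (stA (take i q)) (labeled_examples (take i q)) x"
  have a: "\<And>i. i < length p \<Longrightarrow> ?Q (p @ [s]) i = ?Q p i" by (simp add: nth_append)
  have b: "?Q (p @ [s]) (length p) = (\<exists>x. fst s = Some x \<and> fst (snd s) = choice x0 (stA p) (labeled_examples p) x)"
    by simp
  have c: "\<And>n Q. (\<forall>i<Suc n. Q i) \<longleftrightarrow> (\<forall>i<n. Q i) \<and> Q n" by (auto simp: less_Suc_eq)
  have "follows x0 (p @ [s]) \<longleftrightarrow> (\<forall>i<Suc (length p). ?Q (p @ [s]) i)"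
    unfolding follows_def by simp
  also have "\<dots> \<longleftrightarrow> (\<forall>i<length p. ?Q (p @ [s]) i) \<and> ?Q (p @ [s]) (length p)" by (rule c)
  also have "\<dots> \<longleftrightarrow> (\<forall>i<length p. ?Q p i) \<and> ?Q (p @ [s]) (length p)" using a by auto
  finally show ?thesis unfolding b follows_def .
qed

lemma labeled_examples_snoc:
  "labeled_examples (p @ [s]) = labeled_examples p \<union> labeled_examples [s]"
  by (auto simp: labeled_examples_def)

lemma reach_prefix: "reach t p v \<Longrightarrow> p = q @ r \<Longrightarrow> \<exists>u. reach t q u"
proof (induction arbitrary: q r rule: reach.induct)
  case reach_root
  then show ?case using reach.reach_root by auto
next
  case (reach_step p v lab c)
  show ?case
  proof (cases "r = []")
    case True
    then have "q = p @ [(nx v, lab, ny c, nphi c)]" using reach_step.prems by simp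
    moreover have "reach t (p @ [(nx v, lab, ny c, nphi c)]) c"
      using reach.reach_step[OF reach_step.hyps(1) reach_step.hyps(2)] .
    ultimately show ?thesis by blast
  next
    case False
    have "p = butlast (p @ [(nx v, lab, ny c, nphi c)])" by simp
    also have "\<dots> = butlast (q @ r)" using reach_step.prems by simp
    also have "\<dots> = q @ butlast r" using False by (simp add: butlast_append)
    finally have "p = q @ butlast r" .
    then show ?thesis using reach_step.IH by blast
  qed
qed

lemma reach_last: "reach t p v \<Longrightarrow> p \<noteq> [] \<Longrightarrow> fst (snd (snd (last p))) = ny v"
  by (cases rule: reach.cases) auto

lemma size_kid: "(lab, c) \<in> set ks \<Longrightarrow> size c < size (DNode a b d ks)"
  by (induction ks) auto

lemma size_kid_gen: "(lab, c) \<in> set ks \<Longrightarrow> size c < Suc (n + size_list (size_prod f size) ks)"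
  by (induction ks) auto

lemma size_kid2: "(lab, c) \<in> set (kids v) \<Longrightarrow> size c < size v"
  by (cases v) (auto intro: size_kid_gen)

lemma phase1:
  assumes dt: "dff_tree Ys Phi t"
    and sh: "\<forall>p v. reach t p v \<longrightarrow> \<not> is_leaf v \<longrightarrow> fst ` set (kids v) = {(x0, 0)} \<union> labeled_examples p"
  shows "reach t p v \<Longrightarrow> follows x0 p \<Longrightarrow> \<exists>p' w. reach t p' w \<and> is_leaf w \<and> follows x0 p'"
proof (induction "size v" arbitrary: p v rule: less_induct)
  case less
  show ?case
  proof (cases "is_leaf v")
    case True
    then show ?thesis using less by blast
  next
    case False
    have "nx v \<noteq> None" using dt less.prems(1) False unfolding dff_tree_def by blast
    then obtain x where nx: "nx v = Some x" by auto
    let ?E = "labeled_examples p"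
    let ?k = "choice x0 (stA p) ?E x"
    have "?k \<in> {(x0, 0)} \<union> ?E"
    proof (cases "fires (stA p) ?E x")
      case True
      then have "\<exists>k. k \<in> ?E \<and> snd k \<noteq> 0 \<and> stA p k \<noteq> {} \<and> sat (stA p k) x"
        unfolding fires_def by blast
      from someI_ex[OF this] True show ?thesis unfolding choice_def by auto
    qed (auto simp: choice_def)
    then have "?k \<in> fst ` set (kids v)" using sh less.prems False by auto
    then obtain c where c: "(?k, c) \<in> set (kids v)" by force
    let ?s = "(nx v, ?k, ny c, nphi c)"
    have r: "reach t (p @ [?s]) c" using reach_step[OF less.prems(1) c] .
    have f: "follows x0 (p @ [?s])" using less.prems(2) nx by (simp add: follows_snoc)
    show ?thesis using less.hyps[OF size_kid2[OF c] r f] .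
  qed
qed

definition I1 :: "('x \<Rightarrow> nat) \<Rightarrow> ('x \<Rightarrow> ('x \<Rightarrow> bool) set) \<Rightarrow> (('x \<times> nat) \<Rightarrow> ('x \<Rightarrow> bool) set) \<Rightarrow> ('x \<times> nat) set \<Rightarrow> bool" where
  "I1 l Sx A E \<longleftrightarrow> (\<forall>k. A k \<noteq> {} \<longrightarrow> k \<in> E \<and> snd k = l (fst k) \<and> snd k \<noteq> 0 \<and> A k \<subseteq> Sx (fst k))"

definition I2 :: "('x \<Rightarrow> ('x \<Rightarrow> bool) set) \<Rightarrow> (('x \<times> nat) \<Rightarrow> ('x \<Rightarrow> bool) set) \<Rightarrow> bool" where
  "I2 Sx A \<longleftrightarrow> (\<forall>k1 k2. A k1 \<noteq> {} \<longrightarrow> A k2 \<noteq> {} \<longrightarrow> Sx (fst k1) = Sx (fst k2) \<longrightarrow> k1 = k2)"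

lemma Sigma_upd_insert: "Sigma UNIV (A(k := insert c (A k))) = insert (k, c) (Sigma UNIV A)"
  by (auto split: if_splits)

lemma neg_neg: "neg (neg \<chi>) = \<chi>"
  by (simp add: neg_def)

lemma phase2:
  fixes l :: "'x \<Rightarrow> nat" and \<psi> :: "'x \<Rightarrow> 'x \<Rightarrow> ('x \<Rightarrow> bool) option"
  assumes hx0: "l x0 = 0"
    and hSx: "\<forall>x. l x \<noteq> 0 \<longrightarrow> (\<exists>j\<in>{1..R}. Sx x = S j \<and> sat (S j) x)"
    and hpsi: "\<forall>x xh. l x \<noteq> l xh \<longrightarrow>
              (if l xh \<noteq> 0 then (\<exists>\<phi>. \<psi> x xh = Some \<phi> \<and> \<phi> \<in> Fset Phi x \<inter> neg ` Sx xh)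
               else (\<exists>\<phi>. \<psi> x xh = Some \<phi> \<and> \<phi> \<in> Sx x \<inter> neg ` Fset Phi xh))"
  shows "follows x0 p \<Longrightarrow> (\<forall>s\<in>set p. \<exists>x xh yh \<phi>o. s = (Some x, (xh, yh), Some (l x), \<phi>o) \<and> yh \<noteq> l x \<and> \<psi> x xh = \<phi>o)
    \<Longrightarrow> I1 l Sx (stA p) (labeled_examples p) \<and> I2 Sx (stA p) \<and> finite (Sigma UNIV (stA p)) \<and> card (Sigma UNIV (stA p)) = length p"
proof (induction p rule: rev_induct)
  case Nil
  then show ?case by (simp add: I1_def I2_def stA_def)
next
  case (snoc s p)
  let ?A = "stA p"
  let ?E = "labeled_examples p"
  from snoc.prems(1) have fp: "follows x0 p" by (simp add: follows_snoc)
  from snoc.prems(2) have sp: "\<forall>s\<in>set p. \<exists>x xh yh \<phi>o. s = (Some x, (xh, yh), Some (l x), \<phi>o) \<and> yh \<noteq> l x \<and> \<psi> x xh = \<phi>o" by simp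
  from snoc.IH[OF fp sp] have i1: "I1 l Sx ?A ?E" and i2: "I2 Sx ?A"
    and fin: "finite (Sigma UNIV ?A)" and cd: "card (Sigma UNIV ?A) = length p" by auto
  from snoc.prems(2) obtain x xh yh \<phi>o where s: "s = (Some x, (xh, yh), Some (l x), \<phi>o)"
    and ne: "yh \<noteq> l x" and ps: "\<psi> x xh = \<phi>o" by auto
  from snoc.prems(1) s have ch: "(xh, yh) = choice x0 ?A ?E x" by (simp add: follows_snoc)
  have E': "labeled_examples (p @ [s]) = ?E \<union> {(x, l x)}"
    using s by (auto simp: labeled_examples_def)
  show ?case
  proof (cases "fires ?A ?E x")
    case True
    then have "\<exists>k. k \<in> ?E \<and> snd k \<noteq> 0 \<and> ?A k \<noteq> {} \<and> sat (?A k) x"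
      unfolding fires_def by blast
    have eq: "(xh, yh) = (SOME k. k \<in> ?E \<and> snd k \<noteq> 0 \<and> ?A k \<noteq> {} \<and> sat (?A k) x)"
      using ch True unfolding choice_def by simp
    have "(xh, yh) \<in> ?E \<and> snd (xh, yh) \<noteq> 0 \<and> ?A (xh, yh) \<noteq> {} \<and> sat (?A (xh, yh)) x"
      unfolding eq by (rule someI_ex[OF \<open>\<exists>k. _\<close>])
    then have P: "(xh, yh) \<in> ?E" "yh \<noteq> 0" "?A (xh, yh) \<noteq> {}" "sat (?A (xh, yh)) x"
      by (simp_all only: snd_conv not_False_eq_True)
    have i1x: "(xh, yh) \<in> ?E \<and> snd (xh, yh) = l (fst (xh, yh)) \<and> snd (xh, yh) \<noteq> 0 \<and> ?A (xh, yh) \<subseteq> Sx (fst (xh, yh))"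
      using i1[unfolded I1_def, rule_format, OF P(3)] .
    then have lxh: "yh = l xh" and sub: "?A (xh, yh) \<subseteq> Sx xh" unfolding fst_conv snd_conv by blast+
    have d1: "l x \<noteq> l xh" using ne lxh by simp
    have d2: "l xh \<noteq> 0" using lxh P(2) by simp
    have "\<exists>\<phi>. \<psi> x xh = Some \<phi> \<and> \<phi> \<in> Fset Phi x \<inter> neg ` Sx xh"
      using hpsi[rule_format, OF d1] by (simp only: if_P[OF d2])
    then obtain \<phi> where ph: "\<psi> x xh = Some \<phi>" "\<phi> \<in> Fset Phi x" "\<phi> \<in> neg ` Sx xh"
      by blast
    then obtain \<chi> where chi: "\<chi> \<in> Sx xh" "\<phi> = neg \<chi>" by auto
    have "\<phi> x" using ph by (simp add: Fset_def)
    then have nchi: "\<not> \<chi> x" using chi by (simp add: neg_def)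
    have notin: "\<chi> \<notin> ?A (xh, yh)" using P(4) nchi unfolding sat_def by auto
    have A': "stA (p @ [s]) = ?A((xh, yh) := insert \<chi> (?A (xh, yh)))"
      using s ps[symmetric] ph(1) P(2) chi(2) by (simp add: stA_snoc upd_def neg_neg)
    have nz: "\<And>k. stA (p @ [s]) k \<noteq> {} \<longleftrightarrow> ?A k \<noteq> {}"
    proof -
      fix k show "stA (p @ [s]) k \<noteq> {} \<longleftrightarrow> ?A k \<noteq> {}"
        by (cases "k = (xh, yh)") (simp_all add: A' P(3))
    qed
    have "I1 l Sx (stA (p @ [s])) (labeled_examples (p @ [s]))"
      unfolding I1_def
    proof (intro allI impI)
      fix k assume k: "stA (p @ [s]) k \<noteq> {}"
      show "k \<in> labeled_examples (p @ [s]) \<and> snd k = l (fst k) \<and> snd k \<noteq> 0 \<and> stA (p @ [s]) k \<subseteq> Sx (fst k)"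
      proof (cases "k = (xh, yh)")
        case True
        then show ?thesis using A' E' chi(1) lxh sub P(1) P(2) by simp
      next
        case False
        then have k2: "?A k \<noteq> {}" "stA (p @ [s]) k = ?A k" using k A' by simp_all
        have "k \<in> ?E \<and> snd k = l (fst k) \<and> snd k \<noteq> 0 \<and> ?A k \<subseteq> Sx (fst k)"
          using i1 k2(1) unfolding I1_def by blast
        then show ?thesis unfolding k2(2) E' by blast
      qed
    qed
    moreover have "I2 Sx (stA (p @ [s]))" using i2 unfolding I2_def nz .
    moreover have W: "Sigma UNIV (stA (p @ [s])) = insert ((xh, yh), \<chi>) (Sigma UNIV ?A)"
      unfolding A' by (rule Sigma_upd_insert)
    moreover have ni: "((xh, yh), \<chi>) \<notin> Sigma UNIV ?A" using notin by auto
    moreover have "finite (Sigma UNIV (stA (p @ [s])))" using W fin by simp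
    moreover have "card (Sigma UNIV (stA (p @ [s]))) = length (p @ [s])"
      unfolding W using card_insert_disjoint[OF fin ni] cd by simp
    ultimately show ?thesis by blast
  next
    case False
    with ch have xh: "(xh, yh) = (x0, 0)" unfolding choice_def by auto
    then have lx: "l x \<noteq> 0" using ne by auto
    have "l x \<noteq> l xh" using xh hx0 lx by auto
    have d3: "\<not> l xh \<noteq> 0" using xh hx0 by simp
    have "\<exists>\<phi>. \<psi> x xh = Some \<phi> \<and> \<phi> \<in> Sx x \<inter> neg ` Fset Phi xh"
      using hpsi[rule_format, OF \<open>l x \<noteq> l xh\<close>] by (simp only: if_not_P[OF d3])
    then obtain \<phi> where ph: "\<psi> x xh = Some \<phi>" "\<phi> \<in> Sx x" by blast
    from hSx lx obtain j where j: "j \<in> {1..R}" "Sx x = S j" "sat (S j) x" by blast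
    have claim: "\<And>k. ?A k \<noteq> {} \<Longrightarrow> Sx (fst k) \<noteq> Sx x"
    proof
      fix k assume a: "?A k \<noteq> {}" "Sx (fst k) = Sx x"
      with i1 have "k \<in> ?E" "snd k \<noteq> 0" "?A k \<subseteq> Sx (fst k)" unfolding I1_def by blast+
      then have "sat (?A k) x" using a j unfolding sat_def by auto
      then have "fires ?A ?E x" unfolding fires_def using a \<open>k \<in> ?E\<close> \<open>snd k \<noteq> 0\<close> by blast
      then show False using False by simp
    qed
    have emp: "?A (x, l x) = {}" using claim[of "(x, l x)"] by auto
    have A': "stA (p @ [s]) = ?A((x, l x) := {\<phi>})"
      using s ps[symmetric] ph(1) xh emp by (simp add: stA_snoc upd_def)
    have "I1 l Sx (stA (p @ [s])) (labeled_examples (p @ [s]))"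
      using i1 A' E' ph(2) lx unfolding I1_def by auto
    moreover have "I2 Sx (stA (p @ [s]))"
      unfolding I2_def
    proof (intro allI impI)
      fix k1 k2 assume a: "stA (p @ [s]) k1 \<noteq> {}" "stA (p @ [s]) k2 \<noteq> {}" "Sx (fst k1) = Sx (fst k2)"
      show "k1 = k2"
      proof (cases "k1 = (x, l x)"; cases "k2 = (x, l x)")
        assume "k1 \<noteq> (x, l x)" "k2 \<noteq> (x, l x)"
        then have "stA p k1 \<noteq> {}" "stA p k2 \<noteq> {}" using a(1,2) A' by simp_all
        then show ?thesis using a(3) i2 unfolding I2_def by blast
      next
        assume h: "k1 = (x, l x)" "k2 \<noteq> (x, l x)"
        then have "stA p k2 \<noteq> {}" using a(2) A' by simp
        from claim[OF this] a(3) h(1) show ?thesis by simp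
      next
        assume h: "k1 \<noteq> (x, l x)" "k2 = (x, l x)"
        then have "stA p k1 \<noteq> {}" using a(1) A' by simp
        from claim[OF this] a(3) h(2) show ?thesis by simp
      qed simp
    qed
    moreover have W: "Sigma UNIV (stA (p @ [s])) = insert ((x, l x), \<phi>) (Sigma UNIV ?A)"
      using Sigma_upd_insert[of ?A "(x, l x)" \<phi>] unfolding A' emp by simp
    moreover have ni: "((x, l x), \<phi>) \<notin> Sigma UNIV ?A" using emp by auto
    moreover have "finite (Sigma UNIV (stA (p @ [s])))" using W fin by simp
    moreover have "card (Sigma UNIV (stA (p @ [s]))) = length (p @ [s])"
      unfolding W using card_insert_disjoint[OF fin ni] cd by simp
    ultimately show ?thesis by blast
  qed
qed

lemma bound:
  assumes hSx: "\<forall>x. l x \<noteq> 0 \<longrightarrow> (\<exists>j\<in>{1..R}. Sx x = S j \<and> sat (S j) x)"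
    and hS: "\<forall>j\<in>{1..R}. finite (S j) \<and> card (S j) \<le> M"
    and i1: "I1 l Sx A E" and i2: "I2 Sx A"
  shows "card (Sigma UNIV A) \<le> R * M"
proof -
  let ?W = "Sigma UNIV A"
  let ?f = "\<lambda>(k, \<phi>). (Sx (fst k), \<phi>)"
  let ?B = "Sigma (S ` {1..R}) (\<lambda>Z. Z)"
  have inj: "inj_on ?f ?W"
  proof (rule inj_onI)
    fix a b assume "a \<in> ?W" "b \<in> ?W" "?f a = ?f b"
    then obtain k1 \<phi>1 k2 \<phi>2 where ab: "a = (k1, \<phi>1)" "b = (k2, \<phi>2)" "\<phi>1 \<in> A k1" "\<phi>2 \<in> A k2"
      "Sx (fst k1) = Sx (fst k2)" "\<phi>1 = \<phi>2" by auto
    then have "A k1 \<noteq> {}" "A k2 \<noteq> {}" by auto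
    with i2 ab have "k1 = k2" unfolding I2_def by blast
    then show "a = b" using ab by simp
  qed
  have sub: "?f ` ?W \<subseteq> ?B"
  proof
    fix z assume "z \<in> ?f ` ?W"
    then obtain k \<phi> where z: "z = (Sx (fst k), \<phi>)" "\<phi> \<in> A k" by auto
    then have "A k \<noteq> {}" by auto
    with i1 have "snd k = l (fst k)" "snd k \<noteq> 0" "A k \<subseteq> Sx (fst k)" unfolding I1_def by blast+
    with hSx obtain j where "j \<in> {1..R}" "Sx (fst k) = S j" by metis
    then show "z \<in> ?B" using z \<open>A k \<subseteq> Sx (fst k)\<close> by auto
  qed
  have finB: "finite ?B" using hS by auto
  have "card ?W = card (?f ` ?W)" using card_image[OF inj] by simp
  also have "\<dots> \<le> card ?B" using card_mono[OF finB sub] .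
  also have "\<dots> = sum card (S ` {1..R})" using hS by (subst card_SigmaI) auto
  also have "\<dots> \<le> sum (card \<circ> S) {1..R}" by (rule sum_image_le) auto
  also have "\<dots> \<le> card {1..R} * M" using hS sum_bounded_above[of "{1..R}" "card \<circ> S" M] by auto
  also have "\<dots> = R * M" by simp
  finally show ?thesis .
qed

theorem mainTheorem5:
  fixes L R M :: nat and Phi :: "('x \<Rightarrow> bool) set" and x0 :: 'x
  assumes "\<forall>\<phi>\<in>Phi. neg \<phi> \<in> Phi"
    and "class_consistent (rcm_class L R M Phi) {(x0, 0)}"
  shows "DFFdim {0..L} Phi (rcm_class L R M Phi) {(x0, 0)} \<le> enat (R * M)"
  unfolding DFFdim_def
proof (rule Sup_least)
  fix e assume "e \<in> {enat h | h. \<exists>t. dff_tree {0..L} Phi t \<and> shattered (rcm_class L R M Phi) {(x0, 0)} t h}"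
  then obtain h t where e: "e = enat h" and dt: "dff_tree {0..L} Phi t"
    and sh: "shattered (rcm_class L R M Phi) {(x0, 0)} t h" by auto
  have sh2: "\<forall>p v. reach t p v \<longrightarrow> \<not> is_leaf v \<longrightarrow> fst ` set (kids v) = {(x0, 0)} \<union> labeled_examples p"
    using sh unfolding shattered_def by blast
  have "follows x0 []" by (simp add: follows_def)
  from phase1[OF dt sh2 reach_root this] obtain p w where
    rw: "reach t p w" and lw: "is_leaf w" and fw: "follows x0 p" by blast
  from sh rw lw have len: "length p = h" unfolding shattered_def by blast
  from sh rw lw obtain T where T: "T \<in> restrict_class (rcm_class L R M Phi) {(x0, 0)}"
    and pc: "path_consistent T p" unfolding shattered_def by blast
  obtain l \<psi> where Tl: "T = (l, \<psi>)" by fastforce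
  from T Tl have hx0: "l x0 = 0" by (simp add: restrict_class_def consistent_with_def)
  from T Tl obtain S q where Sq: "(S, q) \<in> rcm_params L R M Phi" and Tt: "(l, \<psi>) \<in> rcm_teachers L R Phi S q"
    by (auto simp: restrict_class_def rcm_class_def)
  from Tt obtain Sx where hSx0: "\<forall>x. l x \<noteq> 0 \<longrightarrow> (\<exists>j\<in>{1..R}. Sx x = S j \<and> sat (S j) x \<and> q j = l x)"
    and hpsi: "\<forall>x xh. l x \<noteq> l xh \<longrightarrow>
              (if l xh \<noteq> 0 then (\<exists>\<phi>. \<psi> x xh = Some \<phi> \<and> \<phi> \<in> Fset Phi x \<inter> neg ` Sx xh)
               else (\<exists>\<phi>. \<psi> x xh = Some \<phi> \<and> \<phi> \<in> Sx x \<inter> neg ` Fset Phi xh))"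
    unfolding rcm_teachers_def by blast
  have hSx: "\<forall>x. l x \<noteq> 0 \<longrightarrow> (\<exists>j\<in>{1..R}. Sx x = S j \<and> sat (S j) x)" using hSx0 by blast
  have hS: "\<forall>j\<in>{1..R}. finite (S j) \<and> card (S j) \<le> M" using Sq unfolding rcm_params_def by auto
  have steps: "\<forall>s\<in>set p. \<exists>x xh yh \<phi>o. s = (Some x, (xh, yh), Some (l x), \<phi>o) \<and> yh \<noteq> l x \<and> \<psi> x xh = \<phi>o"
  proof
    fix s assume "s \<in> set p"
    then obtain q1 r1 where pq: "p = q1 @ s # r1" using split_list[of s p] by blast
    have "p = (q1 @ [s]) @ r1" using pq by simp
    then obtain u where ru: "reach t (q1 @ [s]) u" using reach_prefix[OF rw] by blast
    have nyu: "fst (snd (snd s)) = ny u" using reach_last[OF ru] by simp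
    have "\<forall>p v. reach t p v \<longrightarrow> p \<noteq> [] \<longrightarrow> ny v \<noteq> Some (snd (fst (snd (last p))))"
      using sh unfolding shattered_def by blast
    then have "ny u \<noteq> Some (snd (fst (snd (last (q1 @ [s])))))" using ru by blast
    then have c1: "ny u \<noteq> Some (snd (fst (snd s)))" by simp
    obtain xo xh yh yo \<phi>o where sdef: "s = (xo, (xh, yh), yo, \<phi>o)" by (cases s) auto
    have pcs: "\<forall>(xo, (xh, yh), yo, \<phi>o) \<in> set p. \<exists>x. xo = Some x \<and> yo = Some (fst T x) \<and>
        (fst T x \<noteq> yh \<longrightarrow> snd T x xh = \<phi>o)" using pc unfolding path_consistent_def .
    have "\<exists>x. xo = Some x \<and> yo = Some (l x) \<and> (l x \<noteq> yh \<longrightarrow> \<psi> x xh = \<phi>o)"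
      using bspec[OF pcs \<open>s \<in> set p\<close>] unfolding sdef Tl by simp
    then obtain x where "xo = Some x" "yo = Some (l x)" "l x \<noteq> yh \<longrightarrow> \<psi> x xh = \<phi>o" by blast
    then show "\<exists>x xh yh \<phi>o. s = (Some x, (xh, yh), Some (l x), \<phi>o) \<and> yh \<noteq> l x \<and> \<psi> x xh = \<phi>o"
      using nyu c1 sdef by auto
  qed
  from phase2[OF hx0 hSx hpsi fw steps] have
    i1: "I1 l Sx (stA p) (labeled_examples p)" and i2: "I2 Sx (stA p)"
    and cd: "card (Sigma UNIV (stA p)) = length p" by blast+
  have "h \<le> R * M" using bound[OF hSx hS i1 i2] unfolding cd len .
  then show "e \<le> enat (R * M)" using e by simp
qed

end
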